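(* Let $\mathcal{X}$ be a finite set of locations with metric $d$, let $\pi$ be a prior distribution on $\mathcal{X}$ with $\pi(x)>0$ for all $x$, let $\{\Phi_k\}$ be a partition of $\mathcal{X}$ into nonempty disjoint sets, and let $\epsilon_k\ge0$. Let $f(\cdot\mid\cdot)$ be an obfuscation mechanism with $f(x'\mid x)\le e^{\epsilon_k}f(x'\mid y)$ for all $x,y\in\Phi_k$, all $x'\in\mathcal{X}$ and all $k$. Then for every $x'\in\mathcal{X}$ with $\Pr(x')>0$, $$ExpEr(x')\ \ge\ \sum_k \Pr(\Phi_k\mid x')\,e^{-\epsilon_k}\,E'(\Phi_k),$$ where $\Pr(\Phi_k\mid x')=\sum_{y\in\Phi_k}\Pr(y\mid x')$ (and these satisfy $\sum_k\Pr(\Phi_k\mid x')=1$).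
   Context: An obfuscation mechanism is a family of probability distributions $f(\cdot\mid x)$ on $\mathcal{X}$, one for each true location $x\in\mathcal{X}$; $f(x'\mid x)$ is the probability of reporting pseudo-location $x'$ when the true location is $x$. Define $\Pr(x')=\sum_{x\in\mathcal{X}}\pi(x)f(x'\mid x)$ and, when $\Pr(x')>0$, the posterior $\Pr(x\mid x')=\pi(x)f(x'\mid x)/\Pr(x')$. The conditional expected inference error is $$ExpEr(x')=\min_{\hat{x}\in\mathcal{X}}\sum_{x\in\mathcal{X}}\Pr(x\mid x')\,d(\hat{x},x).$$ For a nonempty $\Phi\subseteq\mathcal{X}$, define $$E'(\Phi)=\min_{\hat{x}\in\mathcal{X}}\sum_{x\in\Phi}\frac{\pi(x)}{\sum_{y\in\Phi}\pi(y)}\,d(\hat{x},x).$$ *)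

theory Defs
  imports "HOL-Analysis.Analysis"
begin

text \<open>Locations form a finite set X. A mechanism f is written f x' x = f(x' | x).\<close>

definition is_metric_on :: "'a set \<Rightarrow> ('a \<Rightarrow> 'a \<Rightarrow> real) \<Rightarrow> bool" where
  "is_metric_on X d \<longleftrightarrow>
     (\<forall>x\<in>X. \<forall>y\<in>X. d x y \<ge> 0 \<and> (d x y = 0 \<longleftrightarrow> x = y) \<and> d x y = d y x) \<and>
     (\<forall>x\<in>X. \<forall>y\<in>X. \<forall>z\<in>X. d x z \<le> d x y + d y z)"

definition is_prior :: "'a set \<Rightarrow> ('a \<Rightarrow> real) \<Rightarrow> bool" where
  "is_prior X \<pi> \<longleftrightarrow> (\<forall>x\<in>X. \<pi> x \<ge> 0) \<and> (\<Sum>x\<in>X. \<pi> x) = 1"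

definition is_mechanism :: "'a set \<Rightarrow> ('a \<Rightarrow> 'a \<Rightarrow> real) \<Rightarrow> bool" where
  "is_mechanism X f \<longleftrightarrow> (\<forall>x\<in>X. (\<forall>x'\<in>X. f x' x \<ge> 0) \<and> (\<Sum>x'\<in>X. f x' x) = 1)"

definition Pr_obs :: "'a set \<Rightarrow> ('a \<Rightarrow> real) \<Rightarrow> ('a \<Rightarrow> 'a \<Rightarrow> real) \<Rightarrow> 'a \<Rightarrow> real" where
  "Pr_obs X \<pi> f x' = (\<Sum>x\<in>X. \<pi> x * f x' x)"

definition posterior :: "'a set \<Rightarrow> ('a \<Rightarrow> real) \<Rightarrow> ('a \<Rightarrow> 'a \<Rightarrow> real) \<Rightarrow> 'a \<Rightarrow> 'a \<Rightarrow> real" where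
  "posterior X \<pi> f x x' = \<pi> x * f x' x / Pr_obs X \<pi> f x'"

definition ExpEr :: "'a set \<Rightarrow> ('a \<Rightarrow> 'a \<Rightarrow> real) \<Rightarrow> ('a \<Rightarrow> real) \<Rightarrow> ('a \<Rightarrow> 'a \<Rightarrow> real) \<Rightarrow> 'a \<Rightarrow> real" where
  "ExpEr X d \<pi> f x' = Min ((\<lambda>xh. \<Sum>x\<in>X. posterior X \<pi> f x x' * d xh x) ` X)"

definition E' :: "'a set \<Rightarrow> ('a \<Rightarrow> 'a \<Rightarrow> real) \<Rightarrow> ('a \<Rightarrow> real) \<Rightarrow> 'a set \<Rightarrow> real" where
  "E' X d \<pi> \<Phi> = Min ((\<lambda>xh. \<Sum>x\<in>\<Phi>. \<pi> x / (\<Sum>y\<in>\<Phi>. \<pi> y) * d xh x) ` X)"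

definition Pr_set_post :: "'a set \<Rightarrow> ('a \<Rightarrow> real) \<Rightarrow> ('a \<Rightarrow> 'a \<Rightarrow> real) \<Rightarrow> 'a set \<Rightarrow> 'a \<Rightarrow> real" where
  "Pr_set_post X \<pi> f \<Phi> x' = (\<Sum>y\<in>\<Phi>. posterior X \<pi> f y x')"

end

theory Submission
  imports Defs
begin

theorem mainTheorem2:
  fixes X :: "'a set" and d :: "'a \<Rightarrow> 'a \<Rightarrow> real" and \<pi> :: "'a \<Rightarrow> real"
    and P :: "'a set set" and \<epsilon> :: "'a set \<Rightarrow> real" and f :: "'a \<Rightarrow> 'a \<Rightarrow> real"
    and x' :: 'a
  assumes finX: "finite X" and neX: "X \<noteq> {}"
    and metric: "is_metric_on X d"
    and prior: "is_prior X \<pi>" and pos: "\<forall>x\<in>X. \<pi> x > 0"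
    and part: "\<Union>P = X" "\<forall>A\<in>P. A \<noteq> {}"
      "\<forall>A\<in>P. \<forall>B\<in>P. A \<noteq> B \<longrightarrow> A \<inter> B = {}"
    and eps: "\<forall>A\<in>P. \<epsilon> A \<ge> 0"
    and mech: "is_mechanism X f"
    and dp: "\<forall>A\<in>P. \<forall>x\<in>A. \<forall>y\<in>A. \<forall>z\<in>X. f z x \<le> exp (\<epsilon> A) * f z y"
    and x'X: "x' \<in> X" and prpos: "Pr_obs X \<pi> f x' > 0"
  shows "ExpEr X d \<pi> f x' \<ge> (\<Sum>A\<in>P. Pr_set_post X \<pi> f A x' * exp (- \<epsilon> A) * E' X d \<pi> A)"
proof -
  define Pr where "Pr = Pr_obs X \<pi> f x'"
  define p where "p = (\<lambda>x. posterior X \<pi> f x x')"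
  have p_def': "p x = \<pi> x * f x' x / Pr" for x
    unfolding p_def posterior_def Pr_def by simp
  have finP: "finite P" using finX part(1) by (metis finite_UnionD)
  have AX: "A \<subseteq> X" if "A \<in> P" for A using part(1) that by blast
  have finA: "finite A" if "A \<in> P" for A using AX[OF that] finX finite_subset by blast
  have dnn: "d a b \<ge> 0" if "a \<in> X" "b \<in> X" for a b
    using metric that unfolding is_metric_on_def by blast
  have fnn: "f x' x \<ge> 0" if "x \<in> X" for x using mech x'X that unfolding is_mechanism_def by blast
  let ?S = "\<lambda>xh. \<Sum>x\<in>X. p x * d xh x"
  have key: "?S xh \<ge> (\<Sum>A\<in>P. Pr_set_post X \<pi> f A x' * exp (- \<epsilon> A) * E' X d \<pi> A)"
    if xh: "xh \<in> X" for xh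
  proof -
    have split: "?S xh = (\<Sum>A\<in>P. \<Sum>x\<in>A. p x * d xh x)"
      unfolding part(1)[symmetric]
      using sum.Union_disjoint[of P "\<lambda>x. p x * d xh x"] finA part(3) by auto
    have each: "Pr_set_post X \<pi> f A x' * exp (- \<epsilon> A) * E' X d \<pi> A \<le> (\<Sum>x\<in>A. p x * d xh x)"
      if A: "A \<in> P" for A
    proof -
      define c where "c = Pr_set_post X \<pi> f A x' * exp (- \<epsilon> A)"
      define piA where "piA = (\<Sum>y\<in>A. \<pi> y)"
      have piApos: "piA > 0" unfolding piA_def
        using part(2) A finA[OF A] AX[OF A] pos
        by (intro sum_pos) auto
      have c_eq: "c = (\<Sum>y\<in>A. \<pi> y * f x' y) / Pr * exp (- \<epsilon> A)"
        unfolding c_def Pr_set_post_def using p_def' unfolding p_def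
        by (simp add: sum_divide_distrib)
      have cnn: "c \<ge> 0" unfolding c_eq using prpos AX[OF A] pos fnn
        unfolding Pr_def
        by (intro mult_nonneg_nonneg divide_nonneg_nonneg sum_nonneg)
           (auto intro!: mult_nonneg_nonneg simp: less_imp_le subset_iff)
      have E'le: "E' X d \<pi> A \<le> (\<Sum>x\<in>A. \<pi> x / piA * d xh x)"
        unfolding E'_def piA_def using finX xh by (intro Min_le) auto
      have trm: "c * (\<pi> x / piA) \<le> p x" if x: "x \<in> A" for x
      proof -
        have "(\<Sum>y\<in>A. \<pi> y * f x' y) \<le> (\<Sum>y\<in>A. \<pi> y * (exp (\<epsilon> A) * f x' x))"
          using dp A x x'X AX[OF A] pos
          by (intro sum_mono mult_left_mono) (auto intro: less_imp_le)
        also have "\<dots> = exp (\<epsilon> A) * f x' x * piA"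
          unfolding piA_def by (simp add: sum_distrib_right mult_ac)
        finally have le: "(\<Sum>y\<in>A. \<pi> y * f x' y) \<le> exp (\<epsilon> A) * f x' x * piA" .
        have "c * (\<pi> x / piA) = (\<Sum>y\<in>A. \<pi> y * f x' y) * exp (- \<epsilon> A) * \<pi> x / (piA * Pr)"
          unfolding c_eq by simp
        also have "\<dots> \<le> exp (\<epsilon> A) * f x' x * piA * exp (- \<epsilon> A) * \<pi> x / (piA * Pr)"
          using le piApos prpos pos x AX[OF A] unfolding Pr_def
          by (intro divide_right_mono mult_right_mono) (auto intro: less_imp_le)
        also have "\<dots> = \<pi> x * f x' x / Pr"
          using piApos by (simp add: exp_minus field_simps)
        finally show ?thesis using p_def' by simp
      qed
      have "c * E' X d \<pi> A \<le> c * (\<Sum>x\<in>A. \<pi> x / piA * d xh x)"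
        using mult_left_mono[OF E'le cnn] .
      also have "\<dots> = (\<Sum>x\<in>A. c * (\<pi> x / piA) * d xh x)"
        by (simp add: sum_distrib_left mult_ac)
      also have "\<dots> \<le> (\<Sum>x\<in>A. p x * d xh x)"
        using trm dnn xh AX[OF A] by (intro sum_mono mult_right_mono) auto
      finally show ?thesis unfolding c_def by simp
    qed
    show ?thesis unfolding split by (intro sum_mono each)
  qed
  have "ExpEr X d \<pi> f x' = Min (?S ` X)" unfolding ExpEr_def p_def by simp
  moreover have "Min (?S ` X) \<in> ?S ` X" using finX neX by (intro Min_in) auto
  ultimately show ?thesis using key by auto
qed

end
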